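(* Let $N_p\in\mathbb{N}$, $A,B\in\mathbb{C}^{N_p\times N_p}$ with $A^\dagger=A$, $B^T=B$, let $\Omega=\operatorname{diag}[\Omega_i]_{i=1}^{N_p}$ with all $\Omega_i>0$, and let $X,Y\in\mathbb{C}^{N_p\times N_p}$ be such that $W=\begin{bmatrix} X & Y^*\\ Y & X^*\end{bmatrix}$ satisfies $$\eta\begin{bmatrix} A & B\\ B^* & A^*\end{bmatrix}=W\begin{bmatrix}+\Omega & 0\\ 0&-\Omega\end{bmatrix}W^{-1},\qquad W^{-1}=\eta W^\dagger\eta,\qquad \eta=\begin{bmatrix}+I&0\\0&-I\end{bmatrix}.$$ Let $x_i=X\mathbf e_i$, $y_i=Y\mathbf e_i$, let $\widetilde\Omega_1,\dots,\widetilde\Omega_{N_p}>0$, $\widetilde\Omega=\operatorname{diag}[\widetilde\Omega_i]$, and define $$\widetilde A=A+\sum_{i=1}^{N_p}(\widetilde\Omega_i-\Omega_i)\big[x_ix_i^\dagger+(y_iy_i^\dagger)^*\big],\qquad \widetilde B=B+\sum_{i=1}^{N_p}(\widetilde\Omega_i-\Omega_i)\big[-x_iy_i^\dagger-(x_iy_i^\dagger)^T\big].$$ Then $$\eta\begin{bmatrix} \widetilde A & \widetilde B\\ \widetilde B^* & \widetilde A^*\end{bmatrix}=W\begin{bmatrix}+\widetilde\Omega & 0\\ 0&-\widetilde\Omega\end{bmatrix}W^{-1},$$ i.e. the modified QRPA matrix has the same eigenvector matrix $W$ (still satisfying $W^{-1}=\eta W^\dagger\eta$) with eigenfrequencies $\widetilde\Omega_i$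 in place of $\Omega_i$.
   Context: $A^\dagger$, $A^T$, $A^*$ denote conjugate transpose, transpose and entrywise complex conjugate; $\mathbf e_i$ is the $i$-th standard basis vector of $\mathbb{C}^{N_p}$; $\operatorname{diag}[\cdot]$ is the diagonal matrix with the given diagonal entries. The matrix $\eta\begin{bmatrix} A & B\\ B^* & A^*\end{bmatrix}$ is the QRPA matrix. *)

theory Defs
  imports "HOL-Analysis.Analysis"
begin

text \<open>Complex N_p x N_p matrices are rendered as complex^'n^'n with 'n a finite
index type (N_p = CARD('n)); 2N_p x 2N_p block matrices are indexed by 'n + 'n,
with Inl indexing the first block and Inr the second.\<close>

definition cnjm :: "complex^'m^'n \<Rightarrow> complex^'m^'n" where
  "cnjm M = (\<chi> i j. cnj (M $ i $ j))"

definition adj :: "complex^'m^'n \<Rightarrow> complex^'n^'m" where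
  "adj M = transpose (cnjm M)"

definition block ::
  "complex^'n^'n \<Rightarrow> complex^'n^'n \<Rightarrow> complex^'n^'n \<Rightarrow> complex^'n^'n
   \<Rightarrow> complex^('n + 'n)^('n + 'n)" where
  "block P Q R S = (\<chi> i j. case i of
       Inl a \<Rightarrow> (case j of Inl b \<Rightarrow> P $ a $ b | Inr b \<Rightarrow> Q $ a $ b)
     | Inr a \<Rightarrow> (case j of Inl b \<Rightarrow> R $ a $ b | Inr b \<Rightarrow> S $ a $ b))"

definition eta :: "complex^('n::finite + 'n)^('n + 'n)" where
  "eta = block (mat 1) 0 0 (- mat 1)"

definition diagm :: "('n \<Rightarrow> real) \<Rightarrow> complex^'n^'n" where
  "diagm d = (\<chi> i j. if i = j then complex_of_real (d i) else 0)"

definition outer :: "complex^'n \<Rightarrow> complex^'n \<Rightarrow> complex^'n^'n" where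
  "outer x y = (\<chi> a b. x $ a * cnj (y $ b))"

end

theory Submission
  imports Defs
begin

lemma block_mult:
  "block P Q R S ** block P' Q' R' S' =
   block (P**P'+Q**R') (P**Q'+Q**S') (R**P'+S**R') (R**Q'+S**S')"
  unfolding block_def matrix_matrix_mult_def
  by (simp add: vec_eq_iff UNIV_Plus_UNIV[symmetric] sum.Plus o_def
         split: sum.splits del: UNIV_Plus_UNIV)

lemma block_add:
  "block P Q R S + block P' Q' R' S' = block (P+P') (Q+Q') (R+R') (S+S')"
  unfolding block_def by (simp add: vec_eq_iff split: sum.splits)

lemma block_eq:
  "(block P Q R S = block P' Q' R' S') \<longleftrightarrow> P=P' \<and> Q=Q' \<and> R=R' \<and> S=S'"
  unfolding block_def by (auto simp: vec_eq_iff split: sum.splits)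

lemma adj_block: "adj (block P Q R S) = block (adj P) (adj R) (adj Q) (adj S)"
  unfolding block_def adj_def cnjm_def transpose_def by (simp add: vec_eq_iff split: sum.splits)

lemma neg_mult: "(- A) ** B = - (A ** (B::'a::ring_1^_^_))" "A ** (- B) = - (A ** B)"
  unfolding matrix_matrix_mult_def by (simp_all add: vec_eq_iff sum_negf)

lemma zero_mult: "(0::'a::semiring_1^_^_) ** B = 0" "A ** (0::'a::semiring_1^_^_) = 0"
  unfolding matrix_matrix_mult_def by (simp_all add: vec_eq_iff)

lemma entry_PdQ: "(P ** diagm d ** adj Q) $ a $ b = (\<Sum>k\<in>UNIV. P$a$k * of_real (d k) * cnj (Q$b$k))"
  unfolding matrix_matrix_mult_def diagm_def adj_def cnjm_def transpose_def
  by (simp add: if_distrib cong: if_cong)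

lemma madd_rdistrib: "(A + B) ** (C::'a::semiring_1^_^_) = A ** C + B ** C"
  unfolding matrix_matrix_mult_def by (simp add: vec_eq_iff distrib_right sum.distrib)

lemma key:
  fixes X Y :: "complex^'n::finite^'n" and dl :: "'n \<Rightarrow> real"
  shows "eta ** block
            (\<Sum>i\<in>UNIV. dl i *\<^sub>R
                  (outer (column i X) (column i X) + cnjm (outer (column i Y) (column i Y))))
            (\<Sum>i\<in>UNIV. dl i *\<^sub>R
                  (- outer (column i X) (column i Y) - transpose (outer (column i X) (column i Y))))
            (cnjm (\<Sum>i\<in>UNIV. dl i *\<^sub>R
                  (- outer (column i X) (column i Y) - transpose (outer (column i X) (column i Y)))))
            (cnjm (\<Sum>i\<in>UNIV. dl i *\<^sub>R
                  (outer (column i X) (column i X) + cnjm (outer (column i Y) (column i Y)))))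
   = block X (cnjm Y) Y (cnjm X) ** block (diagm dl) 0 0 (- diagm dl)
          ** (eta ** adj (block X (cnjm Y) Y (cnjm X)) ** eta)"
  unfolding eta_def
  apply (simp only: adj_block block_mult matrix_mul_lid matrix_mul_rid neg_mult zero_mult add_0 add_0_right minus_minus block_eq)
  apply (intro conjI)
  apply (simp_all add: vec_eq_iff entry_PdQ sum_component cnjm_def outer_def column_def adj_def transpose_def matrix_matrix_mult_def diagm_def if_distrib vector_scaleR_component cong: if_cong)
  apply (simp_all add: sum.distrib[symmetric] sum_subtractf[symmetric] sum_negf[symmetric] scaleR_conv_of_real algebra_simps)
  apply (auto intro!: sum.cong simp: algebra_simps)
  done
theorem mainTheorem3:
  fixes A B X Y :: "complex^'n::finite^'n"
    and \<Omega> \<Omega>t :: "'n \<Rightarrow> real"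
  assumes hA: "adj A = A"
    and hB: "transpose B = B"
    and hOm: "\<forall>i. \<Omega> i > 0"
    and hWinv: "invertible (block X (cnjm Y) Y (cnjm X))"
    and hdiag: "eta ** block A B (cnjm B) (cnjm A)
        = block X (cnjm Y) Y (cnjm X) ** block (diagm \<Omega>) 0 0 (- diagm \<Omega>)
          ** matrix_inv (block X (cnjm Y) Y (cnjm X))"
    and hsympl: "matrix_inv (block X (cnjm Y) Y (cnjm X))
        = eta ** adj (block X (cnjm Y) Y (cnjm X)) ** eta"
    and hOmt: "\<forall>i. \<Omega>t i > 0"
  shows "eta ** block
            (A + (\<Sum>i\<in>UNIV. (\<Omega>t i - \<Omega> i) *\<^sub>R
                  (outer (column i X) (column i X) + cnjm (outer (column i Y) (column i Y)))))
            (B + (\<Sum>i\<in>UNIV. (\<Omega>t i - \<Omega> i) *\<^sub>R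
                  (- outer (column i X) (column i Y) - transpose (outer (column i X) (column i Y)))))
            (cnjm (B + (\<Sum>i\<in>UNIV. (\<Omega>t i - \<Omega> i) *\<^sub>R
                  (- outer (column i X) (column i Y) - transpose (outer (column i X) (column i Y))))))
            (cnjm (A + (\<Sum>i\<in>UNIV. (\<Omega>t i - \<Omega> i) *\<^sub>R
                  (outer (column i X) (column i X) + cnjm (outer (column i Y) (column i Y))))))
        = block X (cnjm Y) Y (cnjm X) ** block (diagm \<Omega>t) 0 0 (- diagm \<Omega>t)
          ** matrix_inv (block X (cnjm Y) Y (cnjm X))"
proof -
  let ?W = "block X (cnjm Y) Y (cnjm X)"
  let ?Wi = "eta ** adj ?W ** eta"
  define dl where "dl i = \<Omega>t i - \<Omega> i" for i
  let ?EA = "\<Sum>i\<in>UNIV. dl i *\<^sub>R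
                  (outer (column i X) (column i X) + cnjm (outer (column i Y) (column i Y)))"
  let ?EB = "\<Sum>i\<in>UNIV. dl i *\<^sub>R
                  (- outer (column i X) (column i Y) - transpose (outer (column i X) (column i Y)))"
  have cadd: "cnjm (P + Q) = cnjm P + cnjm Q" for P Q :: "complex^'n^'n"
    unfolding cnjm_def by (simp add: vec_eq_iff)
  have dsplit: "block (diagm \<Omega>t) 0 0 (- diagm \<Omega>t)
      = block (diagm \<Omega>) 0 0 (- diagm \<Omega>) + block (diagm dl) 0 0 (- diagm dl)"
  proof -
    have "diagm \<Omega>t = diagm \<Omega> + diagm dl"
      by (simp add: diagm_def dl_def vec_eq_iff)
    then show ?thesis unfolding block_add by simp
  qed
  have "eta ** block (A + ?EA) (B + ?EB) (cnjm (B + ?EB)) (cnjm (A + ?EA))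
      = eta ** block A B (cnjm B) (cnjm A) + eta ** block ?EA ?EB (cnjm ?EB) (cnjm ?EA)"
    by (simp add: cadd block_add[symmetric] matrix_add_ldistrib)
  also have "\<dots> = ?W ** block (diagm \<Omega>) 0 0 (- diagm \<Omega>) ** ?Wi
      + ?W ** block (diagm dl) 0 0 (- diagm dl) ** ?Wi"
    using hdiag hsympl key[of dl X Y] by simp
  also have "\<dots> = ?W ** block (diagm \<Omega>t) 0 0 (- diagm \<Omega>t) ** ?Wi"
    by (simp add: dsplit matrix_add_ldistrib madd_rdistrib)
  finally show ?thesis using hsympl by (simp add: dl_def)
qed

end
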